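(* Under the model described in the context, for all $s\ge0$, \[ \int_0^\infty\!\!\int_0^\infty \left(1-e^{-sPhG(t)}\right) q(h)\,p(t)\,dh\,dt<\infty . \]
   Context: Let $\lambda>0$, $\alpha>2$. Transmitter locations form a Poisson point process on $\mathbb R^2$ with locally finite mean measure $\Lambda$ and $\Lambda(\mathbb R^2)=\infty$. A test receiver is at a fixed point $\mathbf X_o$, $T(\mathbf x)=\|\mathbf x-\mathbf X_o\|_2$, and $\Lambda(\{\mathbf x: T(\mathbf x)\in A\})=\lambda\int_A p(t)\,dt$ for all Borel $A\subseteq[0,\infty)$, where $p\ge0$ satisfies $p(t)=O(t^{\alpha-1-\epsilon})$ as $t\to\infty$ for some $\epsilon>0$. The path-loss function $G:[0,\infty)\to[0,\infty)$ is bounded, monotone non-increasing, with $G(t)=O(t^{-\alpha})$ as $t\to\infty$. $q$ is a probability density on $[0,\infty)$ with finite first, second and third moments. $P>0$. *)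

theory Defs
  imports "HOL-Analysis.Analysis" "HOL-Library.Landau_Symbols"
begin

end

theory Submission
  imports Defs
begin

theorem lemma1:
  fixes lam \<alpha> \<epsilon> P :: real
    and \<Lambda> :: "(real^2) measure"
    and Xo :: "real^2"
    and p q G :: "real \<Rightarrow> real"
  assumes lam_pos: "lam > 0"
    and alpha_gt: "\<alpha> > 2"
    and P_pos: "P > 0"
    and eps_pos: "\<epsilon> > 0"
    and Lambda_sets: "sets \<Lambda> = sets borel"
    and Lambda_locfin: "\<And>K. compact K \<Longrightarrow> emeasure \<Lambda> K < \<infinity>"
    and Lambda_inf: "emeasure \<Lambda> UNIV = \<infinity>"
    and p_meas: "p \<in> borel_measurable borel"
    and p_nonneg: "\<And>t. t \<ge> 0 \<Longrightarrow> p t \<ge> 0"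
    and Lambda_p: "\<And>A. A \<in> sets borel \<Longrightarrow> A \<subseteq> {0..} \<Longrightarrow>
         emeasure \<Lambda> {x. norm (x - Xo) \<in> A} = ennreal lam * (\<integral>\<^sup>+ t\<in>A. ennreal (p t) \<partial>lborel)"
    and p_growth: "p \<in> O[at_top](\<lambda>t. t powr (\<alpha> - 1 - \<epsilon>))"
    and G_nonneg: "\<And>t. t \<ge> 0 \<Longrightarrow> G t \<ge> 0"
    and G_bounded: "bounded (G ` {0..})"
    and G_mono: "\<And>x y. 0 \<le> x \<Longrightarrow> x \<le> y \<Longrightarrow> G y \<le> G x"
    and G_decay: "G \<in> O[at_top](\<lambda>t. t powr (- \<alpha>))"
    and q_meas: "q \<in> borel_measurable borel"
    and q_nonneg: "\<And>h. h \<ge> 0 \<Longrightarrow> q h \<ge> 0"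
    and q_density: "(\<integral>\<^sup>+ h\<in>{0..}. ennreal (q h) \<partial>lborel) = 1"
    and q_moments: "\<And>k::nat. k \<in> {1,2,3} \<Longrightarrow>
         (\<integral>\<^sup>+ h\<in>{0..}. ennreal (h ^ k * q h) \<partial>lborel) < \<infinity>"
  shows "\<forall>s\<ge>0. (\<integral>\<^sup>+ t\<in>{0..}. (\<integral>\<^sup>+ h\<in>{0..}.
            ennreal ((1 - exp (- s * P * h * G t)) * q h * p t) \<partial>lborel) \<partial>lborel) < \<infinity>"
proof (intro allI impI)
  fix s :: real assume s0: "s \<ge> 0"
  note [measurable] = q_meas p_meas
  define e where "e = -1 - \<epsilon>"
  have e_lt: "e < -1" using eps_pos by (simp add: e_def)
  obtain c1 where c1: "c1 > 0" "eventually (\<lambda>t. norm (p t) \<le> c1 * norm (t powr (\<alpha> - 1 - \<epsilon>))) at_top"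
    using p_growth by (elim landau_o.bigE)
  obtain c2 where c2: "c2 > 0" "eventually (\<lambda>t. norm (G t) \<le> c2 * norm (t powr (- \<alpha>))) at_top"
    using G_decay by (elim landau_o.bigE)
  obtain N1 where N1: "\<And>t. t \<ge> N1 \<Longrightarrow> norm (p t) \<le> c1 * norm (t powr (\<alpha> - 1 - \<epsilon>))"
    using c1(2) unfolding eventually_at_top_linorder by blast
  obtain N2 where N2: "\<And>t. t \<ge> N2 \<Longrightarrow> norm (G t) \<le> c2 * norm (t powr (- \<alpha>))"
    using c2(2) unfolding eventually_at_top_linorder by blast
  define R where "R = max 1 (max N1 N2)"
  have R1: "R \<ge> 1" and RN1: "R \<ge> N1" and RN2: "R \<ge> N2" by (auto simp: R_def)
  obtain B where B: "\<And>t. t \<ge> 0 \<Longrightarrow> norm (G t) \<le> B"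
    using G_bounded unfolding bounded_iff by auto
  have B0: "B \<ge> 0" using B[of 0] norm_ge_zero[of "G 0"] by linarith
  define C where "C = c1 * c2"
  have C0: "C \<ge> 0" using c1 c2 by (simp add: C_def)
  have tail: "G t * p t \<le> C * t powr e" if "t \<ge> R" for t
  proof -
    have t0: "t > 0" using that R1 by simp
    have "G t * p t \<le> norm (G t) * norm (p t)" by (simp add: abs_mult[symmetric])
    also have "\<dots> \<le> (c2 * t powr (- \<alpha>)) * (c1 * t powr (\<alpha> - 1 - \<epsilon>))"
      using N1[of t] N2[of t] that RN1 RN2 t0 by (intro mult_mono) auto
    also have "\<dots> = C * (t powr (- \<alpha>) * t powr (\<alpha> - 1 - \<epsilon>))" by (simp add: C_def)
    also have "t powr (- \<alpha>) * t powr (\<alpha> - 1 - \<epsilon>) = t powr e"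
      by (simp add: powr_add[symmetric] e_def)
    finally show ?thesis .
  qed
  define M1 where "M1 = (\<integral>\<^sup>+ h\<in>{0..}. ennreal (h ^ 1 * q h) \<partial>lborel)"
  have M1_fin: "M1 < \<infinity>" unfolding M1_def by (rule q_moments) simp
  have inner: "(\<integral>\<^sup>+ h\<in>{0..}. ennreal ((1 - exp (- s * P * h * G t)) * q h * p t) \<partial>lborel)
      \<le> ennreal (s * P * G t * p t) * M1" if t0: "t \<ge> 0" for t
  proof -
    have "(\<integral>\<^sup>+ h\<in>{0..}. ennreal ((1 - exp (- s * P * h * G t)) * q h * p t) \<partial>lborel)
       \<le> (\<integral>\<^sup>+ h. ennreal (s * P * G t * p t) * (ennreal (h ^ 1 * q h) * indicator {0..} h) \<partial>lborel)"
    proof (intro nn_integral_mono)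
      fix h :: real
      show "ennreal ((1 - exp (- s * P * h * G t)) * q h * p t) * indicator {0..} h
            \<le> ennreal (s * P * G t * p t) * (ennreal (h ^ 1 * q h) * indicator {0..} h)"
      proof (cases "h \<ge> 0")
        case True
        have x0: "s * P * h * G t \<ge> 0" using s0 P_pos True G_nonneg[OF t0] by simp
        have "1 - exp (- (s * P * h * G t)) \<le> s * P * h * G t"
          using exp_ge_add_one_self[of "- (s * P * h * G t)"] by simp
        hence "(1 - exp (- s * P * h * G t)) * q h * p t \<le> (s * P * h * G t) * q h * p t"
          using q_nonneg[OF True] p_nonneg[OF t0] by (intro mult_right_mono) auto
        also have "\<dots> = (s * P * G t * p t) * (h ^ 1 * q h)" by simp
        finally have le: "(1 - exp (- s * P * h * G t)) * q h * p t \<le> (s * P * G t * p t) * (h ^ 1 * q h)" .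
        have "ennreal ((1 - exp (- s * P * h * G t)) * q h * p t) \<le> ennreal ((s * P * G t * p t) * (h ^ 1 * q h))"
          using le by (rule ennreal_leI)
        also have "\<dots> = ennreal (s * P * G t * p t) * ennreal (h ^ 1 * q h)"
          using s0 P_pos G_nonneg[OF t0] p_nonneg[OF t0] q_nonneg[OF True] True
          by (intro ennreal_mult) auto
        finally show ?thesis using True by simp
      qed simp
    qed
    also have "\<dots> = ennreal (s * P * G t * p t) * M1"
      unfolding M1_def by (intro nn_integral_cmult) simp
    finally show ?thesis .
  qed
  define F where "F t = ennreal (s * P) * M1 * (ennreal B * (ennreal (p t) * indicator {0..R} t)
      + ennreal C * (ennreal (t powr e) * indicator {R..} t))" for t
  have pw: "(\<integral>\<^sup>+ h\<in>{0..}. ennreal ((1 - exp (- s * P * h * G t)) * q h * p t) \<partial>lborel) * indicator {0..} t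
      \<le> F t" for t
  proof (cases "t \<ge> 0")
    case t0: True
    have "ennreal (s * P * G t * p t) \<le> ennreal (s * P) * (ennreal B * (ennreal (p t) * indicator {0..R} t)
      + ennreal C * (ennreal (t powr e) * indicator {R..} t))"
    proof (cases "t \<le> R")
      case True
      have "G t * p t \<le> B * p t"
        using B[OF t0] p_nonneg[OF t0] by (intro mult_right_mono) auto
      hence "s * P * (G t * p t) \<le> s * P * (B * p t)" using s0 P_pos by (intro mult_left_mono) auto
      hence "ennreal (s * P * G t * p t) \<le> ennreal (s * P * (B * p t))" by (intro ennreal_leI) (simp add: mult.assoc)
      also have "\<dots> = ennreal (s * P) * (ennreal B * ennreal (p t))"
        using s0 P_pos B0 p_nonneg[OF t0] by (simp add: ennreal_mult)
      also have "\<dots> \<le> ennreal (s * P) * (ennreal B * (ennreal (p t) * indicator {0..R} t)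
          + ennreal C * (ennreal (t powr e) * indicator {R..} t))"
        using True t0 by (intro mult_left_mono) auto
      finally show ?thesis .
    next
      case False
      have "s * P * (G t * p t) \<le> s * P * (C * t powr e)" using s0 P_pos tail[of t] False
        by (intro mult_left_mono) auto
      hence "ennreal (s * P * G t * p t) \<le> ennreal (s * P * (C * t powr e))" by (intro ennreal_leI) (simp add: mult.assoc)
      also have "\<dots> = ennreal (s * P) * (ennreal C * ennreal (t powr e))"
        using s0 P_pos C0 by (simp add: ennreal_mult)
      also have "\<dots> \<le> ennreal (s * P) * (ennreal B * (ennreal (p t) * indicator {0..R} t)
          + ennreal C * (ennreal (t powr e) * indicator {R..} t))"
        using False by (intro mult_left_mono) auto
      finally show ?thesis .
    qed
    hence "ennreal (s * P * G t * p t) * M1 \<le> (ennreal (s * P) * (ennreal B * (ennreal (p t) * indicator {0..R} t)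
      + ennreal C * (ennreal (t powr e) * indicator {R..} t))) * M1"
      by (rule mult_right_mono) simp
    hence "ennreal (s * P * G t * p t) * M1 \<le> F t"
      unfolding F_def by (simp add: ac_simps)
    thus ?thesis using inner[OF t0] t0 by simp
  next
    case False thus ?thesis by simp
  qed
  have I1: "(\<integral>\<^sup>+ t. ennreal (p t) * indicator {0..R} t \<partial>lborel) < \<infinity>"
  proof -
    have "{x. norm (x - Xo) \<in> {0..R}} = cball Xo R" by (auto simp: dist_norm norm_minus_commute)
    hence "emeasure \<Lambda> {x. norm (x - Xo) \<in> {0..R}} < \<infinity>" using Lambda_locfin by simp
    hence "ennreal lam * (\<integral>\<^sup>+ t\<in>{0..R}. ennreal (p t) \<partial>lborel) < \<infinity>"
      using Lambda_p[of "{0..R}"] by simp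
    thus ?thesis using lam_pos by (auto simp: ennreal_mult_less_top)
  qed
  have I2: "(\<integral>\<^sup>+ t. ennreal (t powr e) * indicator {R..} t \<partial>lborel) < \<infinity>"
  proof -
    have "((\<lambda>x. x powr e) has_integral -(R powr (e+1)) / (e+1)) {R..}"
      using has_integral_powr_to_inf[OF e_lt] R1 by simp
    hence "(\<integral>\<^sup>+ t. ennreal (t powr e) * indicator {R..} t \<partial>lborel) = ennreal (-(R powr (e+1)) / (e+1))"
      by (intro nn_integral_has_integral_lebesgue') auto
    thus ?thesis by simp
  qed
  have "(\<integral>\<^sup>+ t\<in>{0..}. (\<integral>\<^sup>+ h\<in>{0..}.
            ennreal ((1 - exp (- s * P * h * G t)) * q h * p t) \<partial>lborel) \<partial>lborel) \<le> integral\<^sup>N lborel F"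
    by (intro nn_integral_mono pw)
  also have "integral\<^sup>N lborel F = ennreal (s * P) * M1 * (ennreal B * (\<integral>\<^sup>+ t. ennreal (p t) * indicator {0..R} t \<partial>lborel)
      + ennreal C * (\<integral>\<^sup>+ t. ennreal (t powr e) * indicator {R..} t \<partial>lborel))"
  proof -
    have "integral\<^sup>N lborel F = ennreal (s * P) * M1 * (\<integral>\<^sup>+ t. (ennreal B * (ennreal (p t) * indicator {0..R} t)
      + ennreal C * (ennreal (t powr e) * indicator {R..} t)) \<partial>lborel)"
      unfolding F_def by (rule nn_integral_cmult) measurable
    also have "(\<integral>\<^sup>+ t. (ennreal B * (ennreal (p t) * indicator {0..R} t)
      + ennreal C * (ennreal (t powr e) * indicator {R..} t)) \<partial>lborel)
      = (\<integral>\<^sup>+ t. ennreal B * (ennreal (p t) * indicator {0..R} t) \<partial>lborel)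
      + (\<integral>\<^sup>+ t. ennreal C * (ennreal (t powr e) * indicator {R..} t) \<partial>lborel)"
      by (rule nn_integral_add) measurable
    also have "(\<integral>\<^sup>+ t. ennreal B * (ennreal (p t) * indicator {0..R} t) \<partial>lborel)
       = ennreal B * (\<integral>\<^sup>+ t. ennreal (p t) * indicator {0..R} t \<partial>lborel)"
      by (rule nn_integral_cmult) measurable
    also have "(\<integral>\<^sup>+ t. ennreal C * (ennreal (t powr e) * indicator {R..} t) \<partial>lborel)
       = ennreal C * (\<integral>\<^sup>+ t. ennreal (t powr e) * indicator {R..} t \<partial>lborel)"
      by (rule nn_integral_cmult) measurable
    finally show ?thesis .
  qed
  also have "\<dots> < \<infinity>" using M1_fin I1 I2
    by (auto simp: ennreal_mult_less_top)
  finally show "(\<integral>\<^sup>+ t\<in>{0..}. (\<integral>\<^sup>+ h\<in>{0..}.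
            ennreal ((1 - exp (- s * P * h * G t)) * q h * p t) \<partial>lborel) \<partial>lborel) < \<infinity>" .
qed

end
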